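(* Let $R$ be a commutative ring with $R=2R$, $I$ an ideal of $R$ and $n\ge2$. Let $P=R^{2n}$ with the form $\langle p,q\rangle=p^t\widetilde\psi_nq$, and $Q=R^2\oplus P=R^{2n+2}$ with the form $\langle x,y\rangle=x^t\widetilde\psi_{n+1}y$ (the induced form of $\mathbb{H}(R)\oplus P$). Then, as subgroups of $\mathrm{GL}_{2n+2}(R)$, $$\mathrm{ETrans}_{\mathrm{O}}(Q,IQ,\langle\,,\rangle_{\widetilde\psi_{n+1}})=\mathrm{EO}_{2n+2}(R,I).$$
   Context: $\widetilde\psi_m=\sum_{i=1}^m(e_{2i-1,2i}+e_{2i,2i-1})$. Let $\sigma$ be the permutation of $\{1,\dots,2m\}$ with $\sigma(2i)=2i-1$, $\sigma(2i-1)=2i$; for $z\in R$, $1\le i\ne j\le 2m$, $i\ne\sigma(j)$, $oe_{ij}(z)=1_{2m}+ze_{ij}-ze_{\sigma(j)\sigma(i)}$; $\mathrm{EO}_{2m}(R)$ is generated by all $oe_{ij}(z)$, $\mathrm{EO}_{2m}(I)$ by those with $z\in I$, and $\mathrm{EO}_{2m}(R,I)$ is the normal closure of $\mathrm{EO}_{2m}(I)$ in $\mathrm{EO}_{2m}(R)$. For a symmetric invertible $2n\times 2n$ matrix $\varphi$ and $q\in R^{2n}$ with $q^t\varphi q=0$, define the $(2n+2)\times(2n+2)$ block matrices (blocks of sizes $1,1,2n$) $\rho_\varphi(q)=\begin{pmatrix}1&0&0\\0&1&q^t\varphi\\-q&0&I_{2n}\end{pmatrix}$, $\mu_\varphi(q)=\begin{pmatrix}1&0&q^t\varphi\\0&1&0\\0&-q&I_{2n}\end{pmatrix}$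 (the elementary orthogonal transvections $(a,b,p)\mapsto(a,b+\langle p,q\rangle,p-aq)$ and $(a,b,p)\mapsto(a+\langle p,q\rangle,b,p-bq)$ of $Q=R^2\oplus R^{2n}$ with form $\widetilde\psi_1\perp\varphi$). $\mathrm{ETrans}_{\mathrm{O}}(Q,\langle\,,\rangle_{\widetilde\psi_1\perp\varphi})$ is generated by all $\rho_\varphi(q),\mu_\varphi(q)$; $\mathrm{ETrans}_{\mathrm{O}}(IQ,\ldots)$ by those with $q\in I^{2n}$; and $\mathrm{ETrans}_{\mathrm{O}}(Q,IQ,\langle\,,\rangle_{\widetilde\psi_1\perp\varphi})$ is the normal closure of the latter in the former. Here $\varphi=\widetilde\psi_n$, so $\widetilde\psi_1\perp\varphi=\widetilde\psi_{n+1}$. *)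

theory Defs
  imports Main
begin

text \<open>Square N x N matrices over a commutative ring are represented as functions
  nat => nat => 'a, with indices 0..N-1 (0-based) and all entries outside the
  N x N range equal to 0.\<close>

type_synonym 'a sqmat = "nat \<Rightarrow> nat \<Rightarrow> 'a"

definition mat_ok :: "nat \<Rightarrow> 'a::zero sqmat \<Rightarrow> bool" where
  "mat_ok N A \<longleftrightarrow> (\<forall>i j. (N \<le> i \<or> N \<le> j) \<longrightarrow> A i j = 0)"

definition one_mat :: "nat \<Rightarrow> 'a::comm_ring_1 sqmat" where
  "one_mat N = (\<lambda>i j. if i < N \<and> j < N \<and> i = j then 1 else 0)"

definition mmult :: "nat \<Rightarrow> 'a::comm_ring_1 sqmat \<Rightarrow> 'a sqmat \<Rightarrow> 'a sqmat" where
  "mmult N A B = (\<lambda>i j. if i < N \<and> j < N then (\<Sum>k<N. A i k * B k j) else 0)"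

definition is_inv :: "nat \<Rightarrow> 'a::comm_ring_1 sqmat \<Rightarrow> 'a sqmat \<Rightarrow> bool" where
  "is_inv N A B \<longleftrightarrow> mat_ok N B \<and> mmult N A B = one_mat N \<and> mmult N B A = one_mat N"

inductive_set gen_group :: "nat \<Rightarrow> 'a::comm_ring_1 sqmat set \<Rightarrow> 'a sqmat set"
  for N :: nat and S :: "'a sqmat set" where
  gen_one: "one_mat N \<in> gen_group N S"
| gen_base: "A \<in> S \<Longrightarrow> A \<in> gen_group N S"
| gen_mult: "A \<in> gen_group N S \<Longrightarrow> B \<in> gen_group N S \<Longrightarrow> mmult N A B \<in> gen_group N S"
| gen_inv: "A \<in> gen_group N S \<Longrightarrow> is_inv N A B \<Longrightarrow> B \<in> gen_group N S"

definition normal_closure :: "nat \<Rightarrow> 'a::comm_ring_1 sqmat set \<Rightarrow> 'a sqmat set \<Rightarrow> 'a sqmat set" where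
  "normal_closure N G H = gen_group N
     {mmult N (mmult N g h) g' | g h g'. g \<in> G \<and> h \<in> H \<and> is_inv N g g'}"

definition is_ideal :: "'a::comm_ring_1 set \<Rightarrow> bool" where
  "is_ideal I \<longleftrightarrow> 0 \<in> I \<and> (\<forall>x\<in>I. \<forall>y\<in>I. x + y \<in> I) \<and> (\<forall>r x. x \<in> I \<longrightarrow> r * x \<in> I)"

definition emat :: "nat \<Rightarrow> nat \<Rightarrow> 'a::comm_ring_1 sqmat" where
  "emat i j = (\<lambda>k l. if k = i \<and> l = j then 1 else 0)"

text \<open>The permutation sigma, 0-based: swaps 2k and 2k+1 (corresponds to the
  paper's pairing of 2i-1 and 2i in 1-based indexing).\<close>
definition sigma :: "nat \<Rightarrow> nat" where
  "sigma i = (if even i then i + 1 else i - 1)"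

definition psi_t :: "nat \<Rightarrow> 'a::comm_ring_1 sqmat" where
  "psi_t m = (\<lambda>i j. if i < 2*m \<and> j < 2*m \<and> j = sigma i then 1 else 0)"

definition oe :: "nat \<Rightarrow> nat \<Rightarrow> nat \<Rightarrow> 'a::comm_ring_1 \<Rightarrow> 'a sqmat" where
  "oe m i j z = (\<lambda>k l. one_mat (2*m) k l + z * emat i j k l - z * emat (sigma j) (sigma i) k l)"

definition oe_gens :: "nat \<Rightarrow> 'a::comm_ring_1 set \<Rightarrow> 'a sqmat set" where
  "oe_gens m J = {oe m i j z | i j z. i < 2*m \<and> j < 2*m \<and> i \<noteq> j \<and> i \<noteq> sigma j \<and> z \<in> J}"

definition EO :: "nat \<Rightarrow> 'a::comm_ring_1 sqmat set" where
  "EO m = gen_group (2*m) (oe_gens m UNIV)"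

definition EO_ideal :: "nat \<Rightarrow> 'a::comm_ring_1 set \<Rightarrow> 'a sqmat set" where
  "EO_ideal m J = gen_group (2*m) (oe_gens m J)"

definition EO_rel :: "nat \<Rightarrow> 'a::comm_ring_1 set \<Rightarrow> 'a sqmat set" where
  "EO_rel m J = normal_closure (2*m) (EO m) (EO_ideal m J)"

definition qtphi :: "nat \<Rightarrow> 'a::comm_ring_1 sqmat \<Rightarrow> (nat \<Rightarrow> 'a) \<Rightarrow> nat \<Rightarrow> 'a" where
  "qtphi n phi q l = (\<Sum>k<2*n. q k * phi k l)"

definition isotropic :: "nat \<Rightarrow> 'a::comm_ring_1 sqmat \<Rightarrow> (nat \<Rightarrow> 'a) \<Rightarrow> bool" where
  "isotropic n phi q \<longleftrightarrow> (\<Sum>l<2*n. qtphi n phi q l * q l) = 0"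

text \<open>rho_phi(q) and mu_phi(q) as (2n+2) x (2n+2) matrices with blocks of sizes 1,1,2n;
  index 0 is the first block, index 1 the second, indices 2..2n+1 the third.\<close>
definition rho :: "nat \<Rightarrow> 'a::comm_ring_1 sqmat \<Rightarrow> (nat \<Rightarrow> 'a) \<Rightarrow> 'a sqmat" where
  "rho n phi q = (\<lambda>i j.
     if i < 2*n+2 \<and> j < 2*n+2 then
       (if i = j then 1
        else if i = 1 \<and> 2 \<le> j then qtphi n phi q (j - 2)
        else if 2 \<le> i \<and> j = 0 then - q (i - 2)
        else 0)
     else 0)"

definition mu :: "nat \<Rightarrow> 'a::comm_ring_1 sqmat \<Rightarrow> (nat \<Rightarrow> 'a) \<Rightarrow> 'a sqmat" where
  "mu n phi q = (\<lambda>i j.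
     if i < 2*n+2 \<and> j < 2*n+2 then
       (if i = j then 1
        else if i = 0 \<and> 2 \<le> j then qtphi n phi q (j - 2)
        else if 2 \<le> i \<and> j = 1 then - q (i - 2)
        else 0)
     else 0)"

definition etrans_gens :: "nat \<Rightarrow> 'a::comm_ring_1 sqmat \<Rightarrow> 'a set \<Rightarrow> 'a sqmat set" where
  "etrans_gens n phi J = {M | M q. (\<forall>k<2*n. q k \<in> J) \<and> isotropic n phi q \<and>
                                   (M = rho n phi q \<or> M = mu n phi q)}"

definition ETrans :: "nat \<Rightarrow> 'a::comm_ring_1 sqmat \<Rightarrow> 'a sqmat set" where
  "ETrans n phi = gen_group (2*n+2) (etrans_gens n phi UNIV)"

definition ETrans_ideal :: "nat \<Rightarrow> 'a::comm_ring_1 sqmat \<Rightarrow> 'a set \<Rightarrow> 'a sqmat set" where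
  "ETrans_ideal n phi J = gen_group (2*n+2) (etrans_gens n phi J)"

definition ETrans_rel :: "nat \<Rightarrow> 'a::comm_ring_1 sqmat \<Rightarrow> 'a set \<Rightarrow> 'a sqmat set" where
  "ETrans_rel n phi J = normal_closure (2*n+2) (ETrans n phi) (ETrans_ideal n phi J)"

end

theory Submission
  imports Defs
begin


lemma sigma_sigma[simp]: "sigma (sigma i) = i"
  by (simp add: sigma_def)

lemma sigma_lt: "i < 2*m \<Longrightarrow> sigma i < 2*m"
  unfolding sigma_def by (auto elim!: evenE)

lemma sigma_ne[simp]: "sigma i \<noteq> i"
  by (cases "even i") (auto simp: sigma_def elim!: oddE)

lemma sigma_eq_iff: "(sigma i = j) = (i = sigma j)"
  by (auto simp: sigma_def)

lemma sigma_SS[simp]: "sigma (Suc (Suc l)) = Suc (Suc (sigma l))"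
  by (simp add: sigma_def)

lemma sigma_0[simp]: "sigma 0 = 1" and sigma_1[simp]: "sigma 1 = 0"
  by (simp_all add: sigma_def)

lemma mat_ok_mmult[simp]: "mat_ok N (mmult N A B)"
  by (simp add: mat_ok_def mmult_def)

lemma mat_ok_one[simp]: "mat_ok N (one_mat N)"
  by (simp add: mat_ok_def one_mat_def)

lemma mmult_assoc: "mmult N (mmult N A B) C = mmult N A (mmult N B C)"
proof (rule ext, rule ext)
  fix i j
  show "mmult N (mmult N A B) C i j = mmult N A (mmult N B C) i j"
  proof (cases "i < N \<and> j < N")
    case True
    have "mmult N (mmult N A B) C i j = (\<Sum>x<N. (\<Sum>k<N. A i k * B k x) * C x j)"
      using True by (simp add: mmult_def)
    also have "\<dots> = (\<Sum>x<N. \<Sum>k<N. A i k * B k x * C x j)"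
      by (simp add: sum_distrib_right)
    also have "\<dots> = (\<Sum>k<N. \<Sum>x<N. A i k * B k x * C x j)"
      by (rule sum.swap)
    also have "\<dots> = (\<Sum>k<N. A i k * (\<Sum>x<N. B k x * C x j))"
      by (simp add: sum_distrib_left mult.assoc)
    also have "\<dots> = mmult N A (mmult N B C) i j"
      using True by (simp add: mmult_def)
    finally show ?thesis .
  qed (auto simp: mmult_def)
qed

lemma ite1_mult[simp]: "(if P then (1::'a::comm_ring_1) else 0) * x = (if P then x else 0)"
  by simp
lemma mult_ite1[simp]: "x * (if P then (1::'a::comm_ring_1) else 0) = (if P then x else 0)"
  by simp
lemma sum_delta_l[simp]: "(\<Sum>k<(N::nat). if k = a then f k else 0) = (if a < N then f a else (0::'a::comm_monoid_add))"
  by (subst sum.delta) auto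
lemma sum_delta_r[simp]: "(\<Sum>k<(N::nat). if a = k then f k else 0) = (if a < N then f a else (0::'a::comm_monoid_add))"
  by (subst sum.delta') auto

lemma mmult_one_left: "mat_ok N A \<Longrightarrow> mmult N (one_mat N) A = A"
  by (rule ext, rule ext) (auto simp: mmult_def one_mat_def mat_ok_def)

lemma mmult_one_right: "mat_ok N A \<Longrightarrow> mmult N A (one_mat N) = A"
  by (rule ext, rule ext) (auto simp: mmult_def one_mat_def mat_ok_def)

definition GL :: "nat \<Rightarrow> 'a::comm_ring_1 sqmat set" where
  "GL N = {A. mat_ok N A \<and> (\<exists>B. is_inv N A B)}"

lemma is_inv_sym: "mat_ok N A \<Longrightarrow> is_inv N A B \<Longrightarrow> is_inv N B A"
  by (simp add: is_inv_def)

lemma is_inv_one: "is_inv N (one_mat N) (one_mat N)"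
  by (simp add: is_inv_def mmult_one_left)

lemma is_inv_mmult:
  assumes "mat_ok N A" "mat_ok N B" "is_inv N A A'" "is_inv N B B'"
  shows "is_inv N (mmult N A B) (mmult N B' A')"
proof -
  have ok: "mat_ok N A'" "mat_ok N B'" using assms by (auto simp: is_inv_def)
  have "mmult N (mmult N A B) (mmult N B' A') = mmult N A (mmult N (mmult N B B') A')"
    by (simp add: mmult_assoc)
  also have "\<dots> = one_mat N" using assms ok by (simp add: is_inv_def mmult_one_left)
  finally have 1: "mmult N (mmult N A B) (mmult N B' A') = one_mat N" .
  have "mmult N (mmult N B' A') (mmult N A B) = mmult N B' (mmult N (mmult N A' A) B)"
    by (simp add: mmult_assoc)
  also have "\<dots> = one_mat N" using assms ok by (simp add: is_inv_def mmult_one_left)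
  finally show ?thesis using 1 by (simp add: is_inv_def)
qed

lemma gen_group_GL:
  assumes "A \<in> gen_group N S" "S \<subseteq> GL N"
  shows "A \<in> GL N"
  using assms(1)
proof induction
  case gen_one
  then show ?case using is_inv_one by (auto simp: GL_def)
next
  case (gen_base A)
  then show ?case using assms(2) by auto
next
  case (gen_mult A B)
  then obtain A' B' where "mat_ok N A" "mat_ok N B" "is_inv N A A'" "is_inv N B B'"
    by (auto simp: GL_def)
  then show ?case using is_inv_mmult[of N A B A' B'] by (auto simp: GL_def)
next
  case (gen_inv A B)
  then have "mat_ok N A" "mat_ok N B" by (auto simp: GL_def is_inv_def)
  then show ?case using gen_inv is_inv_sym[of N A B] by (auto simp: GL_def)
qed

definition subgrp :: "nat \<Rightarrow> 'a::comm_ring_1 sqmat set \<Rightarrow> bool" where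
  "subgrp N H \<longleftrightarrow> one_mat N \<in> H \<and> (\<forall>A\<in>H. \<forall>B\<in>H. mmult N A B \<in> H)
     \<and> (\<forall>A\<in>H. \<forall>B. is_inv N A B \<longrightarrow> B \<in> H)"

lemma gen_group_subgrp: "subgrp N (gen_group N S)"
  by (auto simp: subgrp_def intro: gen_group.intros)

lemma gen_group_least: "subgrp N H \<Longrightarrow> S \<subseteq> H \<Longrightarrow> gen_group N S \<subseteq> H"
proof
  fix A assume H: "subgrp N H" "S \<subseteq> H" and A: "A \<in> gen_group N S"
  from A show "A \<in> H"
    by induction (use H in \<open>auto simp: subgrp_def\<close>)
qed

lemma gen_group_mono: "S \<subseteq> T \<Longrightarrow> gen_group N S \<subseteq> gen_group N T"
  by (rule gen_group_least[OF gen_group_subgrp]) (auto intro: gen_base)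

lemma gen_group_inv:
  assumes "A \<in> gen_group N S" "S \<subseteq> GL N"
  obtains B where "is_inv N A B" "B \<in> gen_group N S"
  using gen_group_GL[OF assms] assms(1) by (auto simp: GL_def intro: gen_inv)

lemma GL_mmult: "A \<in> GL N \<Longrightarrow> B \<in> GL N \<Longrightarrow> mmult N A B \<in> GL N"
proof -
  assume a: "A \<in> GL N" "B \<in> GL N"
  then obtain A' B' where "mat_ok N A" "mat_ok N B" "is_inv N A A'" "is_inv N B B'"
    by (auto simp: GL_def)
  then show ?thesis using is_inv_mmult[of N A B A' B'] by (auto simp: GL_def)
qed

lemma GL_inv: "A \<in> GL N \<Longrightarrow> is_inv N A B \<Longrightarrow> B \<in> GL N"
  using is_inv_sym by (auto simp: GL_def is_inv_def)

lemma conj_gens_GL: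
  assumes "G \<subseteq> GL N" "K \<subseteq> GL N"
  shows "{mmult N (mmult N g h) g' | g h g'. g \<in> G \<and> h \<in> K \<and> is_inv N g g'} \<subseteq> GL N"
  using assms GL_mmult GL_inv by blast

lemma normal_closure_GL:
  assumes "G \<subseteq> GL N" "K \<subseteq> GL N"
  shows "normal_closure N G K \<subseteq> GL N"
  using gen_group_GL[OF _ conj_gens_GL[OF assms]] unfolding normal_closure_def by blast

lemma conj_assoc: "mmult N (mmult N g (mmult N a b)) g' = mmult N (mmult N (mmult N g a) c) (mmult N (mmult N c' b) g')"
  if "mmult N c c' = one_mat N" "mat_ok N b" for g a b g' c c' :: "'a::comm_ring_1 sqmat"
proof -
  have "mmult N (mmult N (mmult N g a) c) (mmult N (mmult N c' b) g') =
        mmult N (mmult N g a) (mmult N (mmult N c c') (mmult N b g'))"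
    by (simp add: mmult_assoc)
  also have "\<dots> = mmult N (mmult N g (mmult N a b)) g'"
    using that by (simp add: mmult_one_left mmult_assoc)
  finally show ?thesis by simp
qed

lemma normal_closure_normal:
  assumes G: "G \<subseteq> GL N" "\<forall>a\<in>G. \<forall>b\<in>G. mmult N a b \<in> G" and K: "K \<subseteq> GL N"
    and h: "h \<in> normal_closure N G K"
  shows "g \<in> G \<Longrightarrow> is_inv N g g' \<Longrightarrow> mmult N (mmult N g h) g' \<in> normal_closure N G K"
proof -
  let ?C = "{mmult N (mmult N g h) g' | g h g'. g \<in> G \<and> h \<in> K \<and> is_inv N g g'}"
  have NCGL: "normal_closure N G K \<subseteq> GL N" using normal_closure_GL[OF G(1) K] .
  from h have "h \<in> gen_group N ?C" by (simp add: normal_closure_def)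
  then show "g \<in> G \<Longrightarrow> is_inv N g g' \<Longrightarrow> mmult N (mmult N g h) g' \<in> normal_closure N G K"
  proof (induction arbitrary: g g')
    case gen_one
    then have "mmult N (mmult N g (one_mat N)) g' = one_mat N"
      using G(1) by (auto simp: GL_def mmult_one_right is_inv_def)
    then show ?case by (simp add: normal_closure_def gen_group.gen_one)
  next
    case (gen_base A)
    then obtain x k x' where A: "A = mmult N (mmult N x k) x'" "x \<in> G" "k \<in> K" "is_inv N x x'"
      by blast
    have ok: "mat_ok N g" "mat_ok N x" using gen_base A G(1) by (auto simp: GL_def)
    have eq: "mmult N (mmult N g A) g' = mmult N (mmult N (mmult N g x) k) (mmult N x' g')"
      by (simp add: A mmult_assoc)
    have "is_inv N (mmult N g x) (mmult N x' g')"
      using is_inv_mmult[OF ok gen_base(3) A(4)] .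
    moreover have "mmult N g x \<in> G" using G(2) gen_base(2) A(2) by blast
    ultimately show ?case unfolding eq normal_closure_def using A(3)
      by (intro gen_group.gen_base) blast
  next
    case (gen_mult A B)
    have okB: "mat_ok N B" using gen_mult(2) NCGL unfolding normal_closure_def by (auto simp: GL_def)
    have "mmult N (mmult N g (mmult N A B)) g' = mmult N (mmult N (mmult N g A) g') (mmult N (mmult N g B) g')"
      by (rule conj_assoc) (use gen_mult okB in \<open>auto simp: is_inv_def\<close>)
    then show ?case using gen_mult by (simp add: normal_closure_def gen_group.gen_mult)
  next
    case (gen_inv A B)
    have okA: "mat_ok N A" using gen_inv(1) NCGL unfolding normal_closure_def by (auto simp: GL_def)
    have okB: "mat_ok N B" using gen_inv(2) by (simp add: is_inv_def)
    have okg: "mat_ok N g" using gen_inv(4) G(1) by (auto simp: GL_def)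
    have "is_inv N g' g" using is_inv_sym[OF okg gen_inv(5)] .
    have "is_inv N (mmult N (mmult N g A) g') (mmult N (mmult N g B) g')"
    proof -
      have "mmult N (mmult N (mmult N g A) g') (mmult N (mmult N g B) g') = mmult N (mmult N g (mmult N A B)) g'"
        by (rule conj_assoc[symmetric]) (use gen_inv okB in \<open>auto simp: is_inv_def\<close>)
      moreover have "mmult N (mmult N (mmult N g B) g') (mmult N (mmult N g A) g') = mmult N (mmult N g (mmult N B A)) g'"
        by (rule conj_assoc[symmetric]) (use gen_inv okA in \<open>auto simp: is_inv_def\<close>)
      ultimately show ?thesis using gen_inv(2,5) okg by (simp add: is_inv_def mmult_one_right)
    qed
    then show ?case using gen_inv(3)[OF gen_inv(4,5)]
      by (simp add: normal_closure_def) (rule gen_group.gen_inv)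
  qed
qed


lemma sigma_Suc0[simp]: "sigma (Suc 0) = 0" by (simp add: sigma_def)

lemma sigma_lt_iff[simp]: "(sigma l < 2*n) = (l < 2*n)"
  using sigma_lt[of l n] sigma_lt[of "sigma l" n] by auto

lemma sigma_le_iff[simp]: "(2*n \<le> sigma l) = (2*n \<le> l)"
  using sigma_lt_iff[of l n] by linarith

lemma eq_sigma_iff: "(l = sigma k) = (k = sigma l)"
  by (auto simp: sigma_def)

lemma qtphi_psi: "qtphi n (psi_t n) q l = (if l < 2*n then q (sigma l) else 0)"
proof -
  have "qtphi n (psi_t n) q l = (\<Sum>k<2*n. if k = sigma l then (if l < 2*n then q k else 0) else 0)"
    unfolding qtphi_def psi_t_def
    by (rule sum.cong) (auto simp: eq_sigma_iff[of l])
  also have "\<dots> = (if l < 2*n then q (sigma l) else 0)"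
    by (auto simp: sigma_lt)
  finally show ?thesis .
qed

definition Tm :: "nat \<Rightarrow> nat \<Rightarrow> nat \<Rightarrow> (nat \<Rightarrow> 'a::comm_ring_1) \<Rightarrow> 'a \<Rightarrow> 'a sqmat" where
  "Tm n a b q c = (\<lambda>i j. if i < 2*n+2 \<and> j < 2*n+2 then
     (if i = j then 1 else if i = b \<and> 2 \<le> j then q (sigma (j-2))
      else if 2 \<le> i \<and> j = a then - q (i-2) else if i = b \<and> j = a then c else 0) else 0)"

lemma rho_Tm: "rho n (psi_t n) q = Tm n 0 1 q 0"
  by (rule ext, rule ext) (auto simp: rho_def Tm_def qtphi_psi)

lemma mu_Tm: "mu n (psi_t n) q = Tm n 1 0 q 0"
  by (rule ext, rule ext) (auto simp: mu_def Tm_def qtphi_psi)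

lemma sum_split2: "(\<Sum>k<Suc (Suc m). f k) = f 0 + f 1 + (\<Sum>l<m. f (Suc (Suc l)))"
  by (induction m) (auto simp: sum.lessThan_Suc add.assoc)

definition ip :: "nat \<Rightarrow> (nat \<Rightarrow> 'a::comm_ring_1) \<Rightarrow> (nat \<Rightarrow> 'a) \<Rightarrow> 'a" where
  "ip n q q' = (\<Sum>l<2*n. q (sigma l) * q' l)"

lemma N_eq: "2*n+2 = Suc (Suc (2*n))" by simp


lemma nat_cases3: obtains "i = 0" | "i = 1" | i' where "i = Suc (Suc i')"
  by (metis One_nat_def not0_implies_Suc)

lemma Tm01_mult:
  "mmult (2*n+2) (Tm n 0 1 q c) (Tm n 0 1 q' c') = Tm n 0 1 (\<lambda>k. q k + q' k) (c + c' - ip n q q')"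
proof (rule ext, rule ext)
  fix i j
  show "mmult (2*n+2) (Tm n 0 1 q c) (Tm n 0 1 q' c') i j = Tm n 0 1 (\<lambda>k. q k + q' k) (c + c' - ip n q q') i j"
  proof (cases "i < 2*n+2 \<and> j < 2*n+2")
    case False then show ?thesis by (auto simp: mmult_def Tm_def)
  next
    case True
    then have "mmult (2*n+2) (Tm n 0 1 q c) (Tm n 0 1 q' c') i j =
      (\<Sum>k<Suc (Suc (2*n)). Tm n 0 1 q c i k * Tm n 0 1 q' c' k j)"
      by (simp add: mmult_def)
    also have "\<dots> = Tm n 0 1 (\<lambda>k. q k + q' k) (c + c' - ip n q q') i j"
    proof (cases i rule: nat_cases3)
      case 1
      then show ?thesis unfolding sum_split2 using True by (simp add: Tm_def)
    next
      case 2
      then show ?thesis unfolding sum_split2 using True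
        by (cases j rule: nat_cases3) (auto simp: Tm_def ip_def sum_negf sigma_lt cong: if_cong)
    next
      case (3 i')
      then show ?thesis unfolding sum_split2 using True
        by (cases j rule: nat_cases3) (auto simp: Tm_def ip_def sum_negf sigma_lt cong: if_cong)
    qed
    finally show ?thesis .
  qed
qed

lemma Tm10_mult:
  "mmult (2*n+2) (Tm n 1 0 q c) (Tm n 1 0 q' c') = Tm n 1 0 (\<lambda>k. q k + q' k) (c + c' - ip n q q')"
proof (rule ext, rule ext)
  fix i j
  show "mmult (2*n+2) (Tm n 1 0 q c) (Tm n 1 0 q' c') i j = Tm n 1 0 (\<lambda>k. q k + q' k) (c + c' - ip n q q') i j"
  proof (cases "i < 2*n+2 \<and> j < 2*n+2")
    case False then show ?thesis by (auto simp: mmult_def Tm_def)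
  next
    case True
    then have "mmult (2*n+2) (Tm n 1 0 q c) (Tm n 1 0 q' c') i j =
      (\<Sum>k<Suc (Suc (2*n)). Tm n 1 0 q c i k * Tm n 1 0 q' c' k j)"
      by (simp add: mmult_def)
    also have "\<dots> = Tm n 1 0 (\<lambda>k. q k + q' k) (c + c' - ip n q q') i j"
    proof (cases i rule: nat_cases3)
      case 1
      then show ?thesis unfolding sum_split2 using True
        by (cases j rule: nat_cases3) (auto simp: Tm_def ip_def sum_negf sigma_lt cong: if_cong)
    next
      case 2
      then show ?thesis unfolding sum_split2 using True
        by (cases j rule: nat_cases3) (auto simp: Tm_def ip_def sum_negf sigma_lt cong: if_cong)
    next
      case (3 i')
      then show ?thesis unfolding sum_split2 using True
        by (cases j rule: nat_cases3) (auto simp: Tm_def ip_def sum_negf sigma_lt cong: if_cong)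
    qed
    finally show ?thesis .
  qed
qed


lemma single_sigma_iff: "(sigma x = l) = (x = sigma l)"
  by (auto simp: sigma_def)

lemma oe_single0:
  assumes "l < 2*n"
  shows "oe (n+1) (Suc (Suc l)) 0 z = Tm n 0 1 (\<lambda>k. if k = l then - z else 0) 0"
proof (rule ext, rule ext)
  fix r s
  show "oe (n+1) (Suc (Suc l)) 0 z r s = Tm n 0 1 (\<lambda>k. if k = l then - z else 0) 0 r s"
    using assms
    by (cases r rule: nat_cases3; cases s rule: nat_cases3)
      (auto simp: oe_def one_mat_def emat_def Tm_def single_sigma_iff cong: if_cong)
qed

lemma oe_single1:
  assumes "l < 2*n"
  shows "oe (n+1) (Suc (Suc l)) 1 z = Tm n 1 0 (\<lambda>k. if k = l then - z else 0) 0"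
proof (rule ext, rule ext)
  fix r s
  show "oe (n+1) (Suc (Suc l)) 1 z r s = Tm n 1 0 (\<lambda>k. if k = l then - z else 0) 0 r s"
    using assms
    by (cases r rule: nat_cases3; cases s rule: nat_cases3)
      (auto simp: oe_def one_mat_def emat_def Tm_def single_sigma_iff cong: if_cong)
qed


lemma if_neg0[simp]: "(if P then - z else 0) = - (if P then z else (0::'a::ab_group_add))"
  by simp

lemma oe_entry: "oe m i j z r s = (if r < 2*m \<and> s < 2*m \<and> r = s then 1 else 0)
   + (if r = i \<and> s = j then z else 0) - (if r = sigma j \<and> s = sigma i then z else 0)"
  by (simp add: oe_def one_mat_def emat_def)

lemma sum_delta_mult: "(\<Sum>k<(N::nat). (if k = p then (x::'a::comm_ring_1) else 0) * f k) = (if p < N then x * f p else 0)"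
proof -
  have "(\<Sum>k<(N::nat). (if k = p then x else 0) * f k) = (\<Sum>k<(N::nat). if k = p then x * f k else 0)"
    by (rule sum.cong) auto
  then show ?thesis by simp
qed

lemma sum_mult_delta: "(\<Sum>k<(N::nat). f k * (if k = p then (x::'a::comm_ring_1) else 0)) = (if p < N then f p * x else 0)"
proof -
  have "(\<Sum>k<(N::nat). f k * (if k = p then x else 0)) = (\<Sum>k<(N::nat). if k = p then f k * x else 0)"
    by (rule sum.cong) auto
  then show ?thesis by simp
qed

lemma mmult_oe_left:
  assumes "i < 2*m" "j < 2*m"
  shows "mmult (2*m) (oe m i j z) B r s = (if r < 2*m \<and> s < 2*m then
    B r s + (if r = i then z * B j s else 0) - (if r = sigma j then z * B (sigma i) s else 0) else 0)"
proof (cases "r < 2*m \<and> s < 2*m")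
  case True
  have e: "oe m i j z r k = (if k = r then 1 else 0) + (if k = j then (if r = i then z else 0) else 0)
     - (if k = sigma i then (if r = sigma j then z else 0) else 0)" if "k < 2*m" for k
    using that True by (auto simp: oe_entry)
  have "mmult (2*m) (oe m i j z) B r s = (\<Sum>k<2*m. ((if k = r then 1 else 0) + (if k = j then (if r = i then z else 0) else 0)
     - (if k = sigma i then (if r = sigma j then z else 0) else 0)) * B k s)"
    using True unfolding mmult_def by (auto intro!: sum.cong simp: e simp del: sum_delta_l sum_delta_r)
  also have "\<dots> = B r s + (if r = i then z * B j s else 0) - (if r = sigma j then z * B (sigma i) s else 0)"
    using True assms sigma_lt[OF assms(1)] sigma_lt[OF assms(2)]
    by (simp add: ring_distribs sum.distrib sum_subtractf sum_delta_mult sigma_lt del: sum_delta_l sum_delta_r)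
  finally show ?thesis using True by simp
next
  case False
  then have "(r < 2*m \<and> s < 2*m) = False" by simp
  then show ?thesis unfolding mmult_def by (simp only: if_False)
qed

lemma mmult_oe_right:
  assumes "i < 2*m" "j < 2*m"
  shows "mmult (2*m) B (oe m i j z) r s = (if r < 2*m \<and> s < 2*m then
    B r s + (if s = j then z * B r i else 0) - (if s = sigma i then z * B r (sigma j) else 0) else 0)"
proof (cases "r < 2*m \<and> s < 2*m")
  case True
  have e: "oe m i j z k s = (if k = s then 1 else 0) + (if k = i then (if s = j then z else 0) else 0)
     - (if k = sigma j then (if s = sigma i then z else 0) else 0)" if "k < 2*m" for k
    using that True by (auto simp: oe_entry)
  have "mmult (2*m) B (oe m i j z) r s = (\<Sum>k<2*m. B r k * ((if k = s then 1 else 0) + (if k = i then (if s = j then z else 0) else 0)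
     - (if k = sigma j then (if s = sigma i then z else 0) else 0)))"
    using True unfolding mmult_def by (auto intro!: sum.cong simp: e simp del: sum_delta_l sum_delta_r)
  also have "\<dots> = B r s + (if s = j then z * B r i else 0) - (if s = sigma i then z * B r (sigma j) else 0)"
    using True assms sigma_lt[OF assms(1)] sigma_lt[OF assms(2)]
    by (simp add: ring_distribs sum.distrib sum_subtractf sum_mult_delta sigma_lt mult.commute del: sum_delta_l sum_delta_r)
  finally show ?thesis using True by simp
next
  case False
  then have "(r < 2*m \<and> s < 2*m) = False" by simp
  then show ?thesis unfolding mmult_def by (simp only: if_False)
qed


lemma oe_ok: "i < 2*m \<Longrightarrow> j < 2*m \<Longrightarrow> mat_ok (2*m) (oe m i j z)"
  unfolding mat_ok_def oe_entry
proof (intro allI impI)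
  fix a b assume ij: "i < 2*m" "j < 2*m" and ab: "2*m \<le> a \<or> 2*m \<le> b"
  have "sigma i < 2*m" "sigma j < 2*m" using ij sigma_lt by auto
  then have "\<not>(a = i \<and> b = j)" "\<not>(a = sigma j \<and> b = sigma i)" "\<not>(a < 2*m \<and> b < 2*m \<and> a = b)"
    using ij ab by auto
  then show "(if a < 2 * m \<and> b < 2 * m \<and> a = b then 1 else 0) + (if a = i \<and> b = j then z else 0) -
           (if a = sigma j \<and> b = sigma i then z else 0) = 0"
    by (simp only: if_False) simp
qed

lemma oe_zero: "oe m i j 0 = one_mat (2*m)"
  by (simp add: oe_def)

lemma oe_mult_same:
  assumes "i < 2*m" "j < 2*m" "i \<noteq> j" "i \<noteq> sigma j"
  shows "mmult (2*m) (oe m i j z) (oe m i j w) = oe m i j (z + w)"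
proof (rule ext, rule ext)
  fix r s
  have "sigma i \<noteq> sigma j" "j \<noteq> sigma j" "sigma i \<noteq> i" "j \<noteq> sigma i"
    using assms sigma_ne by (metis sigma_sigma)+
  then show "mmult (2*m) (oe m i j z) (oe m i j w) r s = oe m i j (z + w) r s"
    using assms sigma_lt[OF assms(1)] sigma_lt[OF assms(2)]
    unfolding mmult_oe_left[OF assms(1,2)] by (auto simp: oe_entry algebra_simps)
qed

lemma oe_inv:
  assumes "i < 2*m" "j < 2*m" "i \<noteq> j" "i \<noteq> sigma j"
  shows "is_inv (2*m) (oe m i j z) (oe m i j (-z))"
  using assms by (simp add: is_inv_def oe_mult_same oe_zero oe_ok)

lemma oe_swap: "oe m i j z = oe m (sigma j) (sigma i) (-z)"
  by (rule ext, rule ext) (simp add: oe_entry)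

lemma sigma_ge2: "2 \<le> i \<Longrightarrow> 2 \<le> sigma i"
  by (auto simp: sigma_def elim!: oddE)



lemma cases5: obtains "x = a" | "x = b" | "x = c" | "x = d" | "x \<noteq> a \<and> x \<noteq> b \<and> x \<noteq> c \<and> x \<noteq> d"
  by blast

lemma oe_commutator:
  assumes "i < 2*m" "j < 2*m" "i \<noteq> j" "i \<noteq> sigma j" "2 \<le> i" "2 \<le> j"
  shows "mmult (2*m) (mmult (2*m) (mmult (2*m) (oe m i 0 a) (oe m 0 j b)) (oe m i 0 (-a))) (oe m 0 j (-b))
     = oe m i j (a * b)"
proof -
  have m: "0 < 2*m" using assms by simp
  have s2: "2 \<le> sigma i" "2 \<le> sigma j" using sigma_ge2 assms by auto
  have d1: "sigma i \<noteq> sigma j" "j \<noteq> sigma i" using assms(3,4) by (metis sigma_sigma)+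
  have d: "sigma i \<noteq> sigma j" "j \<noteq> sigma j" "sigma i \<noteq> i" "j \<noteq> sigma i"
    "sigma i \<noteq> 0" "sigma j \<noteq> 0" "sigma i \<noteq> 1" "sigma j \<noteq> 1" "i \<noteq> 0" "j \<noteq> 0" "i \<noteq> 1" "j \<noteq> 1"
    "i \<noteq> j" "i \<noteq> sigma j"
    using d1 s2 assms(3-6) sigma_ne[of i] sigma_ne[of j] by (simp_all, metis)
  have d2: "i \<noteq> sigma i" using sigma_ne[of i] by metis
  have lt: "sigma i < 2*m" "sigma j < 2*m" "Suc 0 < 2*m" using assms sigma_lt by auto
  define P1 where "P1 = (\<lambda>r s. one_mat (2*m) r s + (if r = i \<and> s = 0 then a else 0) - (if r = 1 \<and> s = sigma i then a else 0)
     + (if r = 0 \<and> s = j then b else 0) - (if r = sigma j \<and> s = 1 then b else 0) + (if r = i \<and> s = j then a * b else 0))"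
  define P2 where "P2 = (\<lambda>r s. one_mat (2*m) r s
     + (if r = 0 \<and> s = j then b else 0) - (if r = sigma j \<and> s = 1 then b else 0) + (if r = i \<and> s = j then a * b else 0)
     - (if r = sigma j \<and> s = sigma i then a * b else 0))"
  have 1: "mmult (2*m) (oe m i 0 a) (oe m 0 j b) = P1"
  proof (rule ext, rule ext)
    fix r s
    show "mmult (2*m) (oe m i 0 a) (oe m 0 j b) r s = P1 r s"
      unfolding mmult_oe_right[OF m assms(2)] P1_def oe_entry one_mat_def
      apply (rule cases5[where x=r and a=i and b=0 and c=1 and d="sigma j"]; rule cases5[where x=s and a=0 and b=1 and c=j and d="sigma i"])
      using assms(1,2) d d2 lt m
      apply simp_all
      done
  qed
  have 2: "mmult (2*m) P1 (oe m i 0 (-a)) = P2"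
  proof (rule ext, rule ext)
    fix r s
    show "mmult (2*m) P1 (oe m i 0 (-a)) r s = P2 r s"
      unfolding mmult_oe_right[OF assms(1) m] P1_def P2_def oe_entry one_mat_def
      apply (rule cases5[where x=r and a=i and b=0 and c=1 and d="sigma j"]; rule cases5[where x=s and a=0 and b=1 and c=j and d="sigma i"])
      using assms(1,2) d d2 lt m
      apply simp_all
      done
  qed
  have 3: "mmult (2*m) P2 (oe m 0 j (-b)) = oe m i j (a * b)"
  proof (rule ext, rule ext)
    fix r s
    show "mmult (2*m) P2 (oe m 0 j (-b)) r s = oe m i j (a * b) r s"
      unfolding mmult_oe_right[OF m assms(2)] P2_def oe_entry one_mat_def
      apply (rule cases5[where x=r and a=i and b=0 and c=1 and d="sigma j"]; rule cases5[where x=s and a=0 and b=1 and c=j and d="sigma i"])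
      using assms(1,2) d d2 lt m
      apply simp_all
      done
  qed
  show ?thesis using 1 2 3 by simp
qed



definition trunc :: "nat \<Rightarrow> (nat \<Rightarrow> 'a::comm_ring_1) \<Rightarrow> nat \<Rightarrow> 'a" where
  "trunc k q = (\<lambda>l. if l < k then q l else 0)"

definition Sp :: "nat \<Rightarrow> (nat \<Rightarrow> 'a::comm_ring_1) \<Rightarrow> 'a" where
  "Sp k q = (\<Sum>l<k. if odd l then q (l - 1) * q l else 0)"

lemma Tm_zero: "Tm n a b (\<lambda>_. 0) 0 = one_mat (2*n+2)"
  by (rule ext, rule ext) (simp add: Tm_def one_mat_def)

lemma Tm_cong:
  assumes h: "\<And>k. k < 2*n \<Longrightarrow> q k = q' k"
  shows "Tm n a b q c = Tm n a b q' c"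
proof (rule ext, rule ext)
  fix i j
  have 1: "q (sigma (j-2)) = q' (sigma (j-2))" if "j < 2*n+2" "2 \<le> j"
    using that by (intro h) (simp add: sigma_lt)
  have 2: "q (i-2) = q' (i-2)" if "i < 2*n+2" "2 \<le> i"
    using that by (intro h) simp
  show "Tm n a b q c i j = Tm n a b q' c i j"
    unfolding Tm_def using 1 2 by auto
qed

lemma ip_single: "k < 2*n \<Longrightarrow> ip n (trunc k q) (\<lambda>l. if l = k then q k else 0) = (if odd k then q (k - 1) * q k else 0)"
proof -
  assume k: "k < 2*n"
  have "ip n (trunc k q) (\<lambda>l. if l = k then q k else 0) = trunc k q (sigma k) * q k"
    unfolding ip_def using k by (simp add: sum_mult_delta)
  also have "\<dots> = (if odd k then q (k - 1) * q k else 0)"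
    by (auto simp: trunc_def sigma_def elim: oddE)
  finally show ?thesis .
qed

lemma Tm_step:
  assumes k: "k < 2*n" and ab: "(a = 0 \<and> b = 1) \<or> (a = 1 \<and> b = 0)"
  shows "Tm n a b (trunc (Suc k) q) (- Sp (Suc k) q) =
    mmult (2*n+2) (Tm n a b (trunc k q) (- Sp k q)) (Tm n a b (\<lambda>l. if l = k then q k else 0) 0)"
proof -
  have e1: "(\<lambda>l. trunc k q l + (if l = k then q k else 0)) = trunc (Suc k) q"
    by (rule ext) (auto simp: trunc_def)
  have e2: "- Sp k q + 0 - ip n (trunc k q) (\<lambda>l. if l = k then q k else 0) = - Sp (Suc k) q"
    using k by (simp add: ip_single Sp_def)
  from ab show ?thesis
  proof (elim disjE conjE)
    assume "a = 0" "b = 1"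
    then show ?thesis by (simp only: Tm01_mult e1 e2)
  next
    assume "a = 1" "b = 0"
    then show ?thesis by (simp only: Tm10_mult e1 e2)
  qed
qed

lemma oe_gen_single:
  assumes k: "k < 2*n" and ab: "(a = 0 \<and> b = 1) \<or> (a = 1 \<and> b = 0)" and J: "- z \<in> J"
  shows "Tm n a b (\<lambda>l. if l = k then z else 0) 0 \<in> oe_gens (n+1) J"
proof -
  have "Tm n a b (\<lambda>l. if l = k then z else 0) 0 = oe (n+1) (Suc (Suc k)) a (- z)"
    using ab oe_single0[OF k, of "-z"] oe_single1[OF k, of "-z"] by auto
  moreover have "oe (n+1) (Suc (Suc k)) a (- z) \<in> oe_gens (n+1) J"
    unfolding oe_gens_def
    apply (rule CollectI, rule exI[of _ "Suc (Suc k)"], rule exI[of _ a], rule exI[of _ "-z"])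
    using k ab J by (auto simp: sigma_def)
  ultimately show ?thesis by simp
qed

lemma Tm_in_gen:
  assumes ab: "(a = 0 \<and> b = 1) \<or> (a = 1 \<and> b = 0)" and J: "\<And>k. k < 2*n \<Longrightarrow> - q k \<in> J"
  shows "k \<le> 2*n \<Longrightarrow> Tm n a b (trunc k q) (- Sp k q) \<in> gen_group (2*n+2) (oe_gens (n+1) J)"
proof (induction k)
  case 0
  have "trunc 0 q = (\<lambda>_. 0)" by (simp add: trunc_def)
  then show ?case by (simp add: Sp_def Tm_zero gen_one)
next
  case (Suc k)
  then have k: "k < 2*n" by simp
  have 1: "Tm n a b (trunc k q) (- Sp k q) \<in> gen_group (2*n+2) (oe_gens (n+1) J)"
    using Suc by simp
  have 2: "Tm n a b (\<lambda>l. if l = k then q k else 0) 0 \<in> gen_group (2*n+2) (oe_gens (n+1) J)"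
    by (rule gen_base, rule oe_gen_single[OF k ab J[OF k]])
  show ?case unfolding Tm_step[OF k ab] using 1 2 by (rule gen_mult)
qed

lemma sum_pairs: "(\<Sum>l<2*(n::nat). f l) = (\<Sum>i<n. f (2*i) + f (2*i+1))"
  by (induction n) (auto simp: sum.lessThan_Suc add.assoc)

lemma Sp_zero:
  assumes two: "\<forall>r::'a::comm_ring_1. \<exists>s. r = 2 * s" and iso: "isotropic n (psi_t n) (q::nat \<Rightarrow> 'a)"
  shows "Sp (2*n) q = 0"
proof -
  have s1: "(\<Sum>l<2*n. q (sigma l) * q l) = 0"
  proof -
    have "(\<Sum>x<2 * n. (if x < 2 * n then q (sigma x) else 0) * q x) = (\<Sum>l<2*n. q (sigma l) * q l)"
      by (rule sum.cong) auto
    then show ?thesis using iso by (simp add: isotropic_def qtphi_psi)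
  qed
  have "(\<Sum>l<2*n. q (sigma l) * q l) = (\<Sum>i<n. q (2*i+1) * q (2*i) + q (2*i) * q (2*i+1))"
    unfolding sum_pairs by (simp add: sigma_def)
  also have "\<dots> = 2 * Sp (2*n) q"
    unfolding Sp_def sum_pairs by (simp add: sum_distrib_left algebra_simps)
  finally have "2 * Sp (2*n) q = 0" using s1 by simp
  moreover obtain s :: 'a where "1 = 2 * s" using two by blast
  ultimately have "Sp (2*n) q = s * (2 * Sp (2*n) q)"
    by (metis mult.commute mult.left_commute mult_1_left)
  then show ?thesis using \<open>2 * Sp (2*n) q = 0\<close> by simp
qed

lemma Tm_iso_in_gen:
  assumes two: "\<forall>r::'a::comm_ring_1. \<exists>s. r = 2 * s" and iso: "isotropic n (psi_t n) (q::nat \<Rightarrow> 'a)"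
    and ab: "(a = 0 \<and> b = 1) \<or> (a = 1 \<and> b = 0)" and J: "\<And>k. k < 2*n \<Longrightarrow> - q k \<in> J"
  shows "Tm n a b q 0 \<in> gen_group (2*n+2) (oe_gens (n+1) J)"
proof -
  have "Tm n a b q 0 = Tm n a b (trunc (2*n) q) 0"
    by (rule Tm_cong) (simp add: trunc_def)
  also have "\<dots> = Tm n a b (trunc (2*n) q) (- Sp (2*n) q)"
    using Sp_zero[OF two iso] by simp
  finally have "Tm n a b q 0 = Tm n a b (trunc (2*n) q) (- Sp (2*n) q)" .
  then show ?thesis using Tm_in_gen[where a=a and b=b and n=n and q=q and J=J and k="2*n"] ab J by simp
qed



lemma two_N: "2*(n+1) = 2*n+(2::nat)" by simp

lemma oe_gens_GL: "oe_gens m J \<subseteq> GL (2*m)"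
proof
  fix M assume "M \<in> oe_gens m J"
  then obtain i j z where M: "M = oe m i j z" "i < 2*m" "j < 2*m" "i \<noteq> j" "i \<noteq> sigma j"
    by (auto simp: oe_gens_def)
  then show "M \<in> GL (2*m)" using oe_ok[of i m j z] oe_inv[of i m j z] unfolding GL_def by blast
qed

lemma isotropic_single: "k < 2*n \<Longrightarrow> isotropic n (psi_t n) (\<lambda>l. if l = k then c else 0)"
proof -
  assume k: "k < 2*n"
  have "(\<Sum>l<2*n. qtphi n (psi_t n) (\<lambda>l. if l = k then c else 0) l * (if l = k then c else 0))
      = qtphi n (psi_t n) (\<lambda>l. if l = k then c else 0) k * c"
    using k by (simp add: sum_mult_delta)
  also have "\<dots> = 0" using k by (simp add: qtphi_psi sigma_ne)
  finally show ?thesis by (simp add: isotropic_def)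
qed

lemma etrans_memI: "(\<forall>k<2*n. q k \<in> J) \<Longrightarrow> isotropic n phi q \<Longrightarrow> M = rho n phi q \<or> M = mu n phi q
   \<Longrightarrow> M \<in> etrans_gens n phi J"
  unfolding etrans_gens_def by blast

lemma oe_SS_etrans:
  assumes k: "k < 2*n" and a: "a = 0 \<or> a = 1" and J: "0 \<in> J" "- w \<in> J"
  shows "oe (n+1) (Suc (Suc k)) a w \<in> etrans_gens n (psi_t n) J"
proof -
  let ?q = "\<lambda>l. if l = k then - w else 0"
  have q: "\<forall>l<2*n. ?q l \<in> J" using J by auto
  have iso: "isotropic n (psi_t n) ?q" using isotropic_single[OF k] .
  from a show ?thesis
  proof
    assume "a = 0"
    then have "oe (n+1) (Suc (Suc k)) a w = rho n (psi_t n) ?q"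
      unfolding rho_Tm using oe_single0[OF k, of w] by (simp only:)
    then show ?thesis using q iso by (intro etrans_memI) auto
  next
    assume "a = 1"
    then have "oe (n+1) (Suc (Suc k)) a w = mu n (psi_t n) ?q"
      unfolding mu_Tm using oe_single1[OF k, of w] by (simp only:)
    then show ?thesis using q iso by (intro etrans_memI) auto
  qed
qed

lemma oe01_etrans:
  assumes J: "0 \<in> J" "\<forall>x\<in>J. - x \<in> J" and z: "z \<in> J"
    and ij: "i < 2*n+2" "j < 2*n+2" "i \<noteq> j" "i \<noteq> sigma j" and small: "i < 2 \<or> j < 2"
  shows "oe (n+1) i j z \<in> etrans_gens n (psi_t n) J"
proof (cases "j < 2")
  case True
  then have "j = 0 \<or> j = 1" by auto
  then have "2 \<le> i" using ij(3,4) by auto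
  moreover define k where "k = i - 2"
  ultimately have k: "i = Suc (Suc k)" "k < 2*n" using ij(1) by auto
  have "j = 0 \<or> j = 1" using True by auto
  then show ?thesis unfolding k(1) by (rule oe_SS_etrans[OF k(2)]) (use J z in auto)
next
  case False
  then have i2: "i < 2" using small by simp
  have j2: "2 \<le> sigma j" using False sigma_ge2 by simp
  have sj: "sigma j < 2*n+2" using ij(2) sigma_lt[of j "n+1"] by simp
  define k where "k = sigma j - 2"
  have k: "sigma j = Suc (Suc k)" "k < 2*n" using j2 sj by (auto simp: k_def)
  have "sigma i = 0 \<or> sigma i = 1" using i2 by (auto simp: sigma_def)
  then have "oe (n+1) (sigma j) (sigma i) (- z) \<in> etrans_gens n (psi_t n) J"
    unfolding k(1) by (rule oe_SS_etrans[OF k(2)]) (use J z in auto)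
  moreover have "oe (n+1) i j z = oe (n+1) (sigma j) (sigma i) (- z)" by (rule oe_swap)
  ultimately show ?thesis by simp
qed



lemma oeG: "oe_gens (n+1) J \<subseteq> GL (2*n+2)"
  using oe_gens_GL[of "n+1" J] by (simp only: two_N)

lemma etrans_mono: "etrans_gens n phi J \<subseteq> etrans_gens n phi UNIV"
  unfolding etrans_gens_def by blast

lemma etransE:
  assumes two: "\<forall>r::'a::comm_ring_1. \<exists>s. r = 2 * s" and J: "\<forall>x\<in>J. - x \<in> J"
  shows "etrans_gens n (psi_t n) (J::'a set) \<subseteq> gen_group (2*n+2) (oe_gens (n+1) J)"
proof
  fix M assume "M \<in> etrans_gens n (psi_t n) J"
  then obtain q where q: "\<forall>k<2*n. q k \<in> J" "isotropic n (psi_t n) q"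
    "M = rho n (psi_t n) q \<or> M = mu n (psi_t n) q"
    unfolding etrans_gens_def by blast
  have J': "\<And>k. k < 2*n \<Longrightarrow> - q k \<in> J" using q(1) J by blast
  from q(3) show "M \<in> gen_group (2*n+2) (oe_gens (n+1) J)"
  proof
    assume "M = rho n (psi_t n) q"
    then show ?thesis unfolding rho_Tm using Tm_iso_in_gen[OF two q(2) _ J'] by simp
  next
    assume "M = mu n (psi_t n) q"
    then show ?thesis unfolding mu_Tm using Tm_iso_in_gen[OF two q(2) _ J'] by simp
  qed
qed

lemma etransGL:
  assumes two: "\<forall>r::'a::comm_ring_1. \<exists>s. r = 2 * s"
  shows "etrans_gens n (psi_t n) (J::'a set) \<subseteq> GL (2*n+2)"
proof -
  have "etrans_gens n (psi_t n) (UNIV::'a set) \<subseteq> gen_group (2*n+2) (oe_gens (n+1) UNIV)"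
    by (rule etransE[OF two]) simp
  also have "\<dots> \<subseteq> GL (2*n+2)" using gen_group_GL[OF _ oeG] by blast
  finally show ?thesis using etrans_mono by blast
qed

lemma K_in_NC:
  assumes "k \<in> K" "K \<subseteq> GL N" "one_mat N \<in> G"
  shows "k \<in> normal_closure N G K"
proof -
  have ok: "mat_ok N k" using assms by (auto simp: GL_def)
  have "k = mmult N (mmult N (one_mat N) k) (one_mat N)"
    using ok by (simp add: mmult_one_left mmult_one_right)
  then show ?thesis unfolding normal_closure_def
    using assms(1,3) is_inv_one[of N] by (intro gen_base) blast
qed

lemma oe_comm_N:
  assumes "i < 2*n+2" "j < 2*n+2" "i \<noteq> j" "i \<noteq> sigma j" "2 \<le> i" "2 \<le> j"
  shows "oe (n+1) i j z = mmult (2*n+2) (mmult (2*n+2) (mmult (2*n+2) (oe (n+1) i 0 1) (oe (n+1) 0 j z))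
     (oe (n+1) i 0 (-1))) (oe (n+1) 0 j (-z))"
  using oe_commutator[of i "n+1" j 1 z] assms by (simp only: two_N mult_1_left) simp

lemma oe_small_pieces:
  assumes "i < 2*n+2" "j < 2*n+2" "i \<noteq> j" "i \<noteq> sigma j" "2 \<le> i" "2 \<le> j"
  shows "i < 2*n+2 \<and> (0::nat) < 2*n+2 \<and> i \<noteq> 0 \<and> i \<noteq> sigma 0"
    "(0::nat) < 2*n+2 \<and> j < 2*n+2 \<and> 0 \<noteq> j \<and> 0 \<noteq> sigma j"
  using assms sigma_ge2[of j] by auto

lemma oe_gens_into:
  fixes J :: "'a::comm_ring_1 set"
  assumes J0: "0 \<in> J" and Jn: "\<forall>x\<in>J. - x \<in> J"
    and H: "subgrp (2*n+2) H" "etrans_gens n (psi_t n) J \<subseteq> H"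
    and C: "\<And>g h g'. g \<in> etrans_gens n (psi_t n) UNIV \<Longrightarrow> h \<in> etrans_gens n (psi_t n) J
         \<Longrightarrow> is_inv (2*n+2) g g' \<Longrightarrow> mmult (2*n+2) (mmult (2*n+2) g h) g' \<in> H"
  shows "oe_gens (n+1) J \<subseteq> H"
proof
  fix M assume "M \<in> oe_gens (n+1) J"
  then obtain i j z where M: "M = oe (n+1) i j z" "i < 2*n+2" "j < 2*n+2" "i \<noteq> j" "i \<noteq> sigma j" "z \<in> J"
    by (auto simp: oe_gens_def)
  show "M \<in> H"
  proof (cases "i < 2 \<or> j < 2")
    case True
    then show ?thesis using oe01_etrans[OF J0 Jn M(6) M(2-5)] M(1) H(2) by blast
  next
    case False
    then have ij: "2 \<le> i" "2 \<le> j" by auto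
    note p = oe_small_pieces[OF M(2-5) ij]
    have U: "0 \<in> (UNIV::'a set)" "\<forall>x\<in>(UNIV::'a set). - x \<in> UNIV" by auto
    have g: "oe (n+1) i 0 (1::'a) \<in> etrans_gens n (psi_t n) UNIV"
      by (rule oe01_etrans[OF U(1) U(2)]) (use p(1) in auto)
    have h: "oe (n+1) 0 j z \<in> etrans_gens n (psi_t n) J"
      by (rule oe01_etrans[OF J0 Jn]) (use p(2) M(6) in auto)
    have h': "oe (n+1) 0 j (-z) \<in> etrans_gens n (psi_t n) J"
      by (rule oe01_etrans[OF J0 Jn]) (use p(2) M(6) Jn in auto)
    have inv: "is_inv (2*n+2) (oe (n+1) i 0 1) (oe (n+1) i 0 (-1))"
      using oe_inv[of i "n+1" 0 1] p(1) by (simp only: two_N) simp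
    have c: "mmult (2*n+2) (mmult (2*n+2) (oe (n+1) i 0 1) (oe (n+1) 0 j z)) (oe (n+1) i 0 (-1)) \<in> H"
      by (rule C[OF g h inv])
    have "M = mmult (2*n+2) (mmult (2*n+2) (mmult (2*n+2) (oe (n+1) i 0 1) (oe (n+1) 0 j z))
     (oe (n+1) i 0 (-1))) (oe (n+1) 0 j (-z))"
      unfolding M(1) by (rule oe_comm_N[OF M(2-5) ij])
    then show ?thesis using c h' H unfolding subgrp_def by blast
  qed
qed


lemma gen_closed_mult: "\<forall>a\<in>gen_group N S. \<forall>b\<in>gen_group N S. mmult N a b \<in> gen_group N S"
  by (auto intro: gen_mult)

theorem mainTheorem9:
  fixes I :: "'a::comm_ring_1 set" and n :: nat
  assumes "\<forall>r::'a. \<exists>s. r = 2 * s"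
    and "is_ideal I"
    and "2 \<le> n"
  shows "ETrans_rel n (psi_t n) I = EO_rel (n + 1) I"
proof -
  note two = assms(1)
  have I0: "0 \<in> I" using assms(2) by (simp add: is_ideal_def)
  have In: "\<forall>x\<in>I. - x \<in> I"
    using assms(2) unfolding is_ideal_def by (metis mult_minus1)
  have U0: "0 \<in> (UNIV::'a set)" and Un: "\<forall>x\<in>(UNIV::'a set). - x \<in> UNIV" by auto
  define N where "N = 2*n+2"
  define T :: "'a sqmat set" where "T = gen_group N (etrans_gens n (psi_t n) UNIV)"
  define TI :: "'a sqmat set" where "TI = gen_group N (etrans_gens n (psi_t n) I)"
  define E :: "'a sqmat set" where "E = gen_group N (oe_gens (n+1) UNIV)"
  define EI :: "'a sqmat set" where "EI = gen_group N (oe_gens (n+1) I)"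
  define TR where "TR = normal_closure N T TI"
  define ER where "ER = normal_closure N E EI"
  have lhs: "ETrans_rel n (psi_t n) I = TR"
    by (simp add: ETrans_rel_def ETrans_def ETrans_ideal_def TR_def T_def TI_def N_def)
  have rhs: "EO_rel (n + 1) I = ER"
    unfolding EO_rel_def EO_def EO_ideal_def ER_def E_def EI_def N_def two_N ..
  have TGL: "T \<subseteq> GL N" unfolding T_def N_def using gen_group_GL[OF _ etransGL[OF two]] by blast
  have TIGL: "TI \<subseteq> GL N" unfolding TI_def N_def using gen_group_GL[OF _ etransGL[OF two]] by blast
  have EGL: "E \<subseteq> GL N" unfolding E_def N_def using gen_group_GL[OF _ oeG] by blast
  have EIGL: "EI \<subseteq> GL N" unfolding EI_def N_def using gen_group_GL[OF _ oeG] by blast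
  have TE: "T \<subseteq> E" unfolding T_def E_def N_def
    by (rule gen_group_least[OF gen_group_subgrp etransE[OF two]]) simp
  have TIEI: "TI \<subseteq> EI" unfolding TI_def EI_def N_def
    by (rule gen_group_least[OF gen_group_subgrp etransE[OF two In]])
  have ET: "E \<subseteq> T" unfolding E_def T_def
  proof (rule gen_group_least[OF gen_group_subgrp])
    show "oe_gens (n + 1) (UNIV::'a set) \<subseteq> gen_group N (etrans_gens n (psi_t n) (UNIV::'a set))"
      unfolding N_def
    proof (rule oe_gens_into[OF U0 Un gen_group_subgrp])
      show "etrans_gens n (psi_t n) (UNIV::'a set) \<subseteq> gen_group (2 * n + 2) (etrans_gens n (psi_t n) UNIV)"
        by (auto intro: gen_base)
      fix g h g' assume "g \<in> etrans_gens n (psi_t n) (UNIV::'a set)" "h \<in> etrans_gens n (psi_t n) (UNIV::'a set)"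
        "is_inv (2 * n + 2) g g'"
      then show "mmult (2 * n + 2) (mmult (2 * n + 2) g h) g' \<in> gen_group (2 * n + 2) (etrans_gens n (psi_t n) (UNIV::'a set))"
        by (meson gen_base gen_inv gen_mult)
    qed
  qed
  have TRsub: "subgrp N TR" unfolding TR_def normal_closure_def by (rule gen_group_subgrp)
  have TITR: "TI \<subseteq> TR" unfolding TR_def using K_in_NC[OF _ TIGL, of _ T] gen_one[of N "etrans_gens n (psi_t n) UNIV"]
    by (auto simp: T_def)
  have EITR: "EI \<subseteq> TR" unfolding EI_def
  proof (rule gen_group_least[OF TRsub])
    show "oe_gens (n + 1) I \<subseteq> TR"
    proof (rule oe_gens_into[OF I0 In TRsub[unfolded N_def]])
      show "etrans_gens n (psi_t n) I \<subseteq> TR" using TITR unfolding TI_def by (auto intro: gen_base)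
      fix g h g' assume a: "g \<in> etrans_gens n (psi_t n) (UNIV::'a set)" "h \<in> etrans_gens n (psi_t n) I"
        "is_inv (2 * n + 2) g g'"
      have "g \<in> T" "h \<in> TI" using a unfolding T_def TI_def by (auto intro: gen_base)
      then show "mmult (2 * n + 2) (mmult (2 * n + 2) g h) g' \<in> TR"
        unfolding TR_def normal_closure_def using a(3) N_def by (intro gen_base) blast
    qed
  qed
  have ERTR: "ER \<subseteq> TR" unfolding ER_def normal_closure_def
  proof (rule gen_group_least[OF TRsub], rule subsetI)
    fix x assume "x \<in> {mmult N (mmult N g h) g' |g h g'. g \<in> E \<and> h \<in> EI \<and> is_inv N g g'}"
    then obtain g h g' where x: "x = mmult N (mmult N g h) g'" "g \<in> E" "h \<in> EI" "is_inv N g g'" by blast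
    show "x \<in> TR" unfolding x(1) TR_def
      by (rule normal_closure_normal[OF TGL _ TIGL]) (use x ET EITR in \<open>auto simp: T_def TR_def gen_mult\<close>)
  qed
  have ERsub: "subgrp N ER" unfolding ER_def normal_closure_def by (rule gen_group_subgrp)
  have EIER: "EI \<subseteq> ER" unfolding ER_def using K_in_NC[OF _ EIGL, of _ E] gen_one[of N "oe_gens (n+1) UNIV"]
    by (auto simp: E_def)
  have TRER: "TR \<subseteq> ER" unfolding TR_def normal_closure_def
  proof (rule gen_group_least[OF ERsub], rule subsetI)
    fix x assume "x \<in> {mmult N (mmult N g h) g' |g h g'. g \<in> T \<and> h \<in> TI \<and> is_inv N g g'}"
    then obtain g h g' where x: "x = mmult N (mmult N g h) g'" "g \<in> T" "h \<in> TI" "is_inv N g g'" by blast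
    show "x \<in> ER" unfolding x(1) ER_def
      by (rule normal_closure_normal[OF EGL _ EIGL]) (use x TE TIEI EIER in \<open>auto simp: E_def ER_def gen_mult\<close>)
  qed
  show ?thesis unfolding lhs rhs using ERTR TRER by blast
qed

end
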